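(* Let $M=3$, $d=1$, $R>0$ and $\gamma>0$, and consider the true centers $\mu_1^*=-R$, $\mu_2^*=R$, $\mu_3^*=\gamma R$. Let $$\mathcal{D}=\{(\mu_1,\mu_2,\mu_3)\in\mathbb{R}^3:\ \mu_1\le \gamma R/3,\ \mu_2\ge 2\gamma R/3,\ \mu_3\ge 2\gamma R/3\}.$$ Then there exists a finite $A$ (depending on $R$) such that for every $\gamma>A$, the population log-likelihood $\mathcal{L}$ of $\mathrm{GMM}(\boldsymbol\mu^* )$ satisfies $$\mathcal{L}(0,\gamma R,\gamma R) > \sup_{\boldsymbol\mu\in\partial\mathcal{D}}\mathcal{L}(\boldsymbol\mu).$$ Consequently $\mathcal{L}$ has a local maximum in $\mathcal{D}$ that is not a global maximum.
   Context: Write $\phi(x \mid \mu, 1)$ for the density of $\mathcal{N}(\mu,1)$ on $\mathbb{R}$. For true centers $\boldsymbol{\mu}^* = (\mu_1^*,\mu_2^*,\mu_3^* )$, $\mathrm{GMM}(\boldsymbol{\mu}^* )$ is the distribution with density $\frac13\sum_{i=1}^3 \phi(x\mid \mu_i^*, 1)$. Its population log-likelihood is $$\mathcal{L}(\boldsymbol{\mu}) = \mathbb{E}_{X\sim \mathrm{GMM}(\boldsymbol{\mu}^* )} \log\Big(\frac13\sum_{i=1}^3 \phi(X\mid \mu_i, 1)\Big).$$ The global maxima of $\mathcal{L}$ are $(-R,R,\gamma R)$ and its coordinate permutations. $\partial\mathcal{D}$ denotes the union of the three faces of $\mathcal{D}$ on which one of the defining inequalities holds with equality. *)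

theory Defs
  imports "HOL-Analysis.Analysis"
begin

definition gauss_pdf :: "real \<Rightarrow> real \<Rightarrow> real" where
  "gauss_pdf x mu = exp (- ((x - mu)\<^sup>2) / 2) / sqrt (2 * pi)"

definition gmm3_pdf :: "real \<times> real \<times> real \<Rightarrow> real \<Rightarrow> real" where
  "gmm3_pdf m x = (case m of (m1, m2, m3) \<Rightarrow>
     (gauss_pdf x m1 + gauss_pdf x m2 + gauss_pdf x m3) / 3)"

definition pop_loglik :: "real \<times> real \<times> real \<Rightarrow> real \<times> real \<times> real \<Rightarrow> real" where
  "pop_loglik mstar m = (\<integral>x. gmm3_pdf mstar x * ln (gmm3_pdf m x) \<partial>lborel)"

definition regionD :: "real \<Rightarrow> real \<Rightarrow> (real \<times> real \<times> real) set" where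
  "regionD R \<gamma> = {(m1, m2, m3). m1 \<le> \<gamma> * R / 3 \<and> m2 \<ge> 2 * \<gamma> * R / 3 \<and> m3 \<ge> 2 * \<gamma> * R / 3}"

definition faces_regionD :: "real \<Rightarrow> real \<Rightarrow> (real \<times> real \<times> real) set" where
  "faces_regionD R \<gamma> = {(m1, m2, m3). (m1, m2, m3) \<in> regionD R \<gamma> \<and>
      (m1 = \<gamma> * R / 3 \<or> m2 = 2 * \<gamma> * R / 3 \<or> m3 = 2 * \<gamma> * R / 3)}"

end

theory Submission
  imports Defs "HOL-Probability.Probability"
begin

lemma gauss_nd: "gauss_pdf x mu = normal_density mu 1 x"
  by (simp add: gauss_pdf_def normal_density_def)

lemma gauss_pos: "gauss_pdf x mu > 0"
  by (simp add: gauss_pdf_def)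

lemma gauss_le: "gauss_pdf x mu \<le> 1 / sqrt (2*pi)"
  unfolding gauss_pdf_def by (simp add: divide_right_mono)

lemma G_int: "has_bochner_integral lborel (\<lambda>x. gauss_pdf x mu) 1"
proof -
  have "integrable lborel (normal_density mu 1)" by simp
  then have "has_bochner_integral lborel (normal_density mu 1) 1"
    using integral_normal_density[of 1 mu] by (metis has_bochner_integral_integrable zero_less_one)
  then show ?thesis by (simp add: gauss_nd[abs_def])
qed

lemma G_sq: "has_bochner_integral lborel (\<lambda>x. gauss_pdf x mu * (x - m)\<^sup>2) (1 + (mu-m)\<^sup>2)"
proof -
  have a: "has_bochner_integral lborel (\<lambda>x. normal_density mu 1 x * (x - mu)^(2*1)) 1"
    using normal_moment_even[where k=1 and \<sigma>=1 and \<mu>=mu] by simp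
  have b: "has_bochner_integral lborel (\<lambda>x. normal_density mu 1 x * (x - mu)^(2*0+1)) 0"
    using normal_moment_odd[where k=0 and \<sigma>=1 and \<mu>=mu] by simp
  have c: "has_bochner_integral lborel (\<lambda>x. normal_density mu 1 x) 1"
    using G_int by (simp add: gauss_nd[abs_def])
  have "has_bochner_integral lborel (\<lambda>x. normal_density mu 1 x * (x - mu)^(2*1)
      + 2*(mu - m) * (normal_density mu 1 x * (x - mu)^(2*0+1)) + (mu-m)\<^sup>2 * normal_density mu 1 x)
     (1 + 2*(mu-m)*0 + (mu-m)\<^sup>2 * 1)"
    by (intro has_bochner_integral_add has_bochner_integral_mult_right a b c)
  moreover have "\<And>x. normal_density mu 1 x * (x - mu)^(2*1)
      + 2*(mu - m) * (normal_density mu 1 x * (x - mu)^(2*0+1)) + (mu-m)\<^sup>2 * normal_density mu 1 x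
      = gauss_pdf x mu * (x - m)\<^sup>2"
    by (simp add: gauss_nd power2_eq_square algebra_simps)
  ultimately show ?thesis by simp
qed

lemma G_exp:
  assumes t: "t > -1"
  shows "has_bochner_integral lborel (\<lambda>x. gauss_pdf x mu * exp(-t*(x-m)\<^sup>2/2))
           (exp(-t*(mu-m)\<^sup>2/(2*(1+t))) / sqrt(1+t))"
proof -
  define s where "s = 1 / sqrt (1+t)"
  define x0 where "x0 = (mu + t*m)/(1+t)"
  have s: "s > 0" using t by (simp add: s_def)
  have ss: "s\<^sup>2 = 1/(1+t)" using t by (simp add: s_def power_divide)
  have c: "has_bochner_integral lborel (\<lambda>x. normal_density x0 s x) 1"
    using integral_normal_density[OF s, of x0] integrable_normal_density[OF s, of x0]
    by (metis has_bochner_integral_integrable)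
  have c2: "has_bochner_integral lborel (\<lambda>x. (exp(-t*(mu-m)\<^sup>2/(2*(1+t))) / sqrt(1+t)) * normal_density x0 s x)
             ((exp(-t*(mu-m)\<^sup>2/(2*(1+t))) / sqrt(1+t)) * 1)"
    by (intro has_bochner_integral_mult_right c)
  have eq: "(exp(-t*(mu-m)\<^sup>2/(2*(1+t))) / sqrt(1+t)) * normal_density x0 s x = gauss_pdf x mu * exp(-t*(x-m)\<^sup>2/2)" for x
  proof -
    have p: "((1+t)*x - mu - t*m)\<^sup>2 + t*(mu-m)\<^sup>2 = (1+t)*((x-mu)\<^sup>2 + t*(x-m)\<^sup>2)"
      by (simp add: power2_eq_square algebra_simps)
    have xx: "x - x0 = ((1+t)*x - mu - t*m)/(1+t)" using t unfolding x0_def by (simp add: field_simps)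
    have e: "-t*(mu-m)\<^sup>2/(2*(1+t)) + (-(x - x0)\<^sup>2 / (2 * s\<^sup>2)) = - ((x - mu)\<^sup>2) / 2 + -t*(x-m)\<^sup>2/2"
    proof -
      have "-t*(mu-m)\<^sup>2/(2*(1+t)) + (-(x - x0)\<^sup>2 / (2 * s\<^sup>2))
          = -(((1+t)*x - mu - t*m)\<^sup>2 + t*(mu-m)\<^sup>2)/(2*(1+t))"
      proof -
        define u where "u = (1+t)*x - mu - t*m"
        have t1: "1+t \<noteq> 0" using t by simp
        have "(x - x0)\<^sup>2 / (2 * s\<^sup>2) = (u/(1+t))\<^sup>2/(2/(1+t))"
          unfolding ss xx u_def by simp
        also have "\<dots> = u\<^sup>2/(2*(1+t))" 
        proof -
          have "\<And>a::real. a \<noteq> 0 \<Longrightarrow> (u/a)\<^sup>2/(2/a) = u\<^sup>2/(2*a)" by (simp add: power2_eq_square field_simps)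
          then show ?thesis using t1 by blast
        qed
        finally have "(x - x0)\<^sup>2 / (2 * s\<^sup>2) = ((1+t)*x - mu - t*m)\<^sup>2/(2*(1+t))" unfolding u_def .
        then show ?thesis using t by (simp add: field_simps)
      qed
      also have "\<dots> = -((x-mu)\<^sup>2 + t*(x-m)\<^sup>2)/2" unfolding p using t by (simp add: field_simps)
      finally show ?thesis by (simp add: field_simps)
    qed
    have "normal_density x0 s x = sqrt (1+t) / sqrt (2*pi) * exp (-(x - x0)\<^sup>2 / (2 * s\<^sup>2))"
      unfolding normal_density_def using t s by (simp add: ss real_sqrt_divide real_sqrt_mult field_simps)
    then have "(exp(-t*(mu-m)\<^sup>2/(2*(1+t))) / sqrt(1+t)) * normal_density x0 s x
       = exp(-t*(mu-m)\<^sup>2/(2*(1+t)) + (-(x - x0)\<^sup>2 / (2 * s\<^sup>2))) / sqrt (2*pi)"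
      unfolding exp_add by (simp only:) (use t in \<open>simp add: field_simps\<close>)
    also have "\<dots> = gauss_pdf x mu * exp(-t*(x-m)\<^sup>2/2)"
      unfolding e gauss_pdf_def exp_add by simp
    finally show ?thesis .
  qed
  show ?thesis using c2 eq by simp
qed

definition lc :: real where "lc = ln (sqrt (2*pi))"

lemma lc_pos: "lc > 0"
  unfolding lc_def using pi_gt3 by simp

lemma ln_gauss: "ln (w * gauss_pdf x m) = ln w - lc - (x-m)\<^sup>2/2" if "w > 0"
  using that unfolding gauss_pdf_def lc_def by (simp add: ln_mult ln_div)

lemma gmm_simp: "gmm3_pdf (m1,m2,m3) x = (gauss_pdf x m1 + gauss_pdf x m2 + gauss_pdf x m3)/3"
  by (simp add: gmm3_pdf_def)

lemma gmm_pos: "gmm3_pdf m x > 0"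
  by (cases m) (auto simp: gmm3_pdf_def intro!: add_pos_pos gauss_pos)

lemma gmm_le: "gmm3_pdf m x \<le> 1 / sqrt (2*pi)"
proof (cases m)
  case (fields a b c)
  have "gauss_pdf x a + gauss_pdf x b + gauss_pdf x c \<le> 3 / sqrt (2*pi)"
    using gauss_le[of x a] gauss_le[of x b] gauss_le[of x c] by simp
  then show ?thesis using fields by (simp add: gmm3_pdf_def)
qed

lemma ln_gmm_le: "ln (gmm3_pdf m x) \<le> - lc"
proof -
  have "ln (gmm3_pdf m x) \<le> ln (1 / sqrt (2*pi))"
    using gmm_pos gmm_le by (subst ln_le_cancel_iff) auto
  then show ?thesis unfolding lc_def by (simp add: ln_div)
qed

lemma ln_gmm_ge:
  assumes "gmm3_pdf m x \<ge> w * gauss_pdf x a" "w > 0"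
  shows "ln (gmm3_pdf m x) \<ge> ln w - lc - (x-a)\<^sup>2/2"
proof -
  have "ln (w * gauss_pdf x a) \<le> ln (gmm3_pdf m x)"
    using assms gauss_pos[of x a] gmm_pos[of m x] by (subst ln_le_cancel_iff) auto
  then show ?thesis using ln_gauss[OF assms(2)] by simp
qed

lemma ln_gmm_ge1: "ln (gmm3_pdf (m1,m2,m3) x) \<ge> ln (1/3) - lc - (x-m1)\<^sup>2/2"
  by (rule ln_gmm_ge) (auto simp: gmm_simp intro: add_nonneg_nonneg less_imp_le[OF gauss_pos])

lemma meas_gauss[measurable]: "(\<lambda>x. gauss_pdf x m) \<in> borel_measurable borel"
  unfolding gauss_pdf_def by measurable

lemma meas_gmm[measurable]: "(\<lambda>x. gmm3_pdf m x) \<in> borel_measurable borel"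
  by (cases m) (simp add: gmm_simp)

lemma G_sq_int: "integrable lborel (\<lambda>x. gauss_pdf x mu * (x - m)\<^sup>2)"
  by (rule integrable.intros[OF G_sq])

lemma G_int_int: "integrable lborel (\<lambda>x. gauss_pdf x mu)"
  by (rule integrable.intros[OF G_int])

lemma int_gl: "integrable lborel (\<lambda>x. gauss_pdf x mu * ln (gmm3_pdf (m1,m2,m3) x))"
proof (rule Bochner_Integration.integrable_bound)
  show "integrable lborel (\<lambda>x. (lc - ln (1/3)) * gauss_pdf x mu + 1/2 * (gauss_pdf x mu * (x - m1)\<^sup>2))"
    using G_sq_int G_int_int by simp
  show "(\<lambda>x. gauss_pdf x mu * ln (gmm3_pdf (m1, m2, m3) x)) \<in> borel_measurable lborel"
    by measurable
  show "AE x in lborel. norm (gauss_pdf x mu * ln (gmm3_pdf (m1, m2, m3) x))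
      \<le> norm ((lc - ln (1/3)) * gauss_pdf x mu + 1/2 * (gauss_pdf x mu * (x - m1)\<^sup>2))"
  proof (intro AE_I2)
    fix x
    have p: "gauss_pdf x mu > 0" by (rule gauss_pos)
    have a: "ln (gmm3_pdf (m1,m2,m3) x) \<le> 0" using ln_gmm_le lc_pos by (smt (verit))
    have b: "- ln (gmm3_pdf (m1,m2,m3) x) \<le> lc - ln (1/3) + (x-m1)\<^sup>2/2" using ln_gmm_ge1[of x m1 m2 m3] by simp
    have c: "lc - ln (1/3) \<ge> 0" using lc_pos by (simp add: ln_div)
    have "norm (gauss_pdf x mu * ln (gmm3_pdf (m1, m2, m3) x)) = gauss_pdf x mu * (- ln (gmm3_pdf (m1,m2,m3) x))"
      using p a by (simp add: abs_mult)
    also have "\<dots> \<le> gauss_pdf x mu * (lc - ln (1/3) + (x-m1)\<^sup>2/2)"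
      using p b by (intro mult_left_mono) auto
    also have "\<dots> = (lc - ln (1/3)) * gauss_pdf x mu + 1/2 * (gauss_pdf x mu * (x - m1)\<^sup>2)"
      by (simp add: algebra_simps)
    also have "\<dots> \<le> norm ((lc - ln (1/3)) * gauss_pdf x mu + 1/2 * (gauss_pdf x mu * (x - m1)\<^sup>2))"
      by simp
    finally show "norm (gauss_pdf x mu * ln (gmm3_pdf (m1, m2, m3) x))
      \<le> norm ((lc - ln (1/3)) * gauss_pdf x mu + 1/2 * (gauss_pdf x mu * (x - m1)\<^sup>2))" .
  qed
qed

lemma powr_subadd:
  fixes a b t :: real
  assumes "a > 0" "b > 0" "0 < t" "t \<le> 1"
  shows "(a+b) powr t \<le> a powr t + b powr t"
proof -
  have ha: "a powr (t-1) \<ge> (a+b) powr (t-1)" using assms by (intro powr_mono2') auto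
  have hb: "b powr (t-1) \<ge> (a+b) powr (t-1)" using assms by (intro powr_mono2') auto
  have "(a+b) powr t = a * (a+b) powr (t-1) + b * (a+b) powr (t-1)"
  proof -
    have "a * (a+b) powr (t-1) + b * (a+b) powr (t-1) = (a+b) * (a+b) powr (t-1)" by (simp add: distrib_right)
    also have "\<dots> = (a+b) powr t" using assms by (simp add: powr_diff)
    finally show ?thesis by simp
  qed
  also have "\<dots> \<le> a * a powr (t-1) + b * b powr (t-1)"
    using assms ha hb by (intro add_mono mult_left_mono) auto
  also have "\<dots> = a powr t + b powr t" using assms by (simp add: powr_diff)
  finally show ?thesis .
qed
definition EL :: "real \<Rightarrow> real \<times> real \<times> real \<Rightarrow> real" where
  "EL mu m = (\<integral>x. gauss_pdf x mu * ln (gmm3_pdf m x) \<partial>lborel)"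

lemma int_gl': "integrable lborel (\<lambda>x. gauss_pdf x mu * ln (gmm3_pdf m x))"
  using int_gl by (cases m) auto

lemma pop_decomp: "pop_loglik (a1,a2,a3) m = (EL a1 m + EL a2 m + EL a3 m)/3"
proof -
  have "pop_loglik (a1,a2,a3) m = (\<integral>x. (gauss_pdf x a1 * ln (gmm3_pdf m x) + gauss_pdf x a2 * ln (gmm3_pdf m x)
     + gauss_pdf x a3 * ln (gmm3_pdf m x)) / 3 \<partial>lborel)"
    unfolding pop_loglik_def by (intro Bochner_Integration.integral_cong) (auto simp: gmm_simp field_simps)
  also have "\<dots> = (EL a1 m + EL a2 m + EL a3 m)/3"
    unfolding EL_def using int_gl'[of a1 m] int_gl'[of a2 m] int_gl'[of a3 m] by simp
  finally show ?thesis .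
qed

lemma LB_comp:
  assumes "\<And>x. gmm3_pdf m x \<ge> w * gauss_pdf x a" "w > 0"
  shows "EL mu m \<ge> ln w - lc - (1 + (mu-a)\<^sup>2)/2"
proof -
  have "(\<integral>x. (ln w - lc) * gauss_pdf x mu - 1/2 * (gauss_pdf x mu * (x - a)\<^sup>2) \<partial>lborel)
        \<le> (\<integral>x. gauss_pdf x mu * ln (gmm3_pdf m x) \<partial>lborel)"
  proof (rule integral_mono)
    show "integrable lborel (\<lambda>x. (ln w - lc) * gauss_pdf x mu - 1/2 * (gauss_pdf x mu * (x - a)\<^sup>2))"
      using G_sq_int G_int_int by simp
    show "integrable lborel (\<lambda>x. gauss_pdf x mu * ln (gmm3_pdf m x))" by (rule int_gl')
    fix x
    have "ln (gmm3_pdf m x) \<ge> ln w - lc - (x-a)\<^sup>2/2" by (rule ln_gmm_ge[OF assms(1) assms(2)])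
    then have "gauss_pdf x mu * (ln w - lc - (x-a)\<^sup>2/2) \<le> gauss_pdf x mu * ln (gmm3_pdf m x)"
      using gauss_pos[of x mu] by (intro mult_left_mono) auto
    then show "(ln w - lc) * gauss_pdf x mu - 1/2 * (gauss_pdf x mu * (x - a)\<^sup>2) \<le> gauss_pdf x mu * ln (gmm3_pdf m x)"
      by (simp add: algebra_simps)
  qed
  moreover have "(\<integral>x. (ln w - lc) * gauss_pdf x mu - 1/2 * (gauss_pdf x mu * (x - a)\<^sup>2) \<partial>lborel)
     = (ln w - lc) * 1 - 1/2 * (1 + (mu-a)\<^sup>2)"
    using has_bochner_integral_integral_eq[OF G_sq[of mu a]] has_bochner_integral_integral_eq[OF G_int[of mu]]
      G_sq_int G_int_int by simp
  ultimately show ?thesis unfolding EL_def by simp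
qed

definition Fs :: "real \<Rightarrow> real \<Rightarrow> real \<times> real \<times> real \<Rightarrow> real" where
  "Fs t mu m = (case m of (m1,m2,m3) \<Rightarrow> exp(-t*(mu-m1)\<^sup>2/(2*(1+t))) + exp(-t*(mu-m2)\<^sup>2/(2*(1+t))) + exp(-t*(mu-m3)\<^sup>2/(2*(1+t))))"

lemma UB_comp:
  assumes t: "0 < t" "t \<le> 1"
  shows "EL mu (m1,m2,m3) \<le> - ln 3 - lc - ln(1+t)/(2*t) + ln (Fs t mu (m1,m2,m3)) / t"
proof -
  define E0 where "E0 = exp(-t*(ln 3 + lc))"
  define h where "h x = E0 * (exp(-t*(x-m1)\<^sup>2/2) + exp(-t*(x-m2)\<^sup>2/2) + exp(-t*(x-m3)\<^sup>2/2))" for x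
  define K where "K = E0 * Fs t mu (m1,m2,m3) / sqrt (1+t)"
  have E0: "E0 > 0" unfolding E0_def by simp
  have Fpos: "Fs t mu (m1,m2,m3) > 0" unfolding Fs_def by (simp add: add_pos_pos)
  have K: "K > 0" unfolding K_def using E0 Fpos t by simp
  have hint: "has_bochner_integral lborel (\<lambda>x. gauss_pdf x mu * h x) K"
  proof -
    have "has_bochner_integral lborel (\<lambda>x. E0 * (gauss_pdf x mu * exp(-t*(x-m1)\<^sup>2/2) + gauss_pdf x mu * exp(-t*(x-m2)\<^sup>2/2)
         + gauss_pdf x mu * exp(-t*(x-m3)\<^sup>2/2)))
       (E0 * (exp(-t*(mu-m1)\<^sup>2/(2*(1+t))) / sqrt(1+t) + exp(-t*(mu-m2)\<^sup>2/(2*(1+t))) / sqrt(1+t)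
          + exp(-t*(mu-m3)\<^sup>2/(2*(1+t))) / sqrt(1+t)))"
      using t by (intro has_bochner_integral_mult_right has_bochner_integral_add G_exp) auto
    moreover have "(E0 * (exp(-t*(mu-m1)\<^sup>2/(2*(1+t))) / sqrt(1+t) + exp(-t*(mu-m2)\<^sup>2/(2*(1+t))) / sqrt(1+t)
          + exp(-t*(mu-m3)\<^sup>2/(2*(1+t))) / sqrt(1+t))) = K"
      unfolding K_def Fs_def by (simp add: add_divide_distrib[symmetric])
    ultimately show ?thesis unfolding h_def by (simp add: algebra_simps)
  qed
  have pw: "gauss_pdf x mu * ln (gmm3_pdf (m1,m2,m3) x) \<le> (ln K - 1)/t * gauss_pdf x mu + (1/(K*t)) * (gauss_pdf x mu * h x)" for x
  proof -
    define a1 where "a1 = gauss_pdf x m1 / 3"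
    define a2 where "a2 = gauss_pdf x m2 / 3"
    define a3 where "a3 = gauss_pdf x m3 / 3"
    have ap: "a1 > 0" "a2 > 0" "a3 > 0" unfolding a1_def a2_def a3_def using gauss_pos by auto
    have g: "gmm3_pdf (m1,m2,m3) x = a1 + a2 + a3" unfolding a1_def a2_def a3_def gmm_simp by simp
    have apow: "a powr t = E0 * exp(-t*(x-mm)\<^sup>2/2)" if "a = gauss_pdf x mm / 3" for a mm
    proof -
      have "ln a = ln (1/3) - lc - (x-mm)\<^sup>2/2" using ln_gauss[of "1/3" x mm] unfolding that by simp
      then have "ln a = - ln 3 - lc - (x-mm)\<^sup>2/2" by (simp add: ln_div)
      moreover have "a > 0" unfolding that using gauss_pos[of x mm] by simp
      ultimately have "a powr t = exp (t * (- ln 3 - lc - (x-mm)\<^sup>2/2))" by (simp add: powr_def)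
      also have "\<dots> = E0 * exp(-t*(x-mm)\<^sup>2/2)" unfolding E0_def by (simp add: exp_add[symmetric] algebra_simps)
      finally show ?thesis .
    qed
    have sub: "(a1+a2+a3) powr t \<le> h x"
    proof -
      have "(a1+a2+a3) powr t \<le> (a1+a2) powr t + a3 powr t" using ap t by (intro powr_subadd) auto
      also have "\<dots> \<le> a1 powr t + a2 powr t + a3 powr t" using ap t powr_subadd[of a1 a2 t] by simp
      also have "\<dots> = h x" unfolding h_def using apow a1_def a2_def a3_def by (simp add: algebra_simps)
      finally show ?thesis .
    qed
    have gp: "a1+a2+a3 > 0" using ap by simp
    have "ln ((a1+a2+a3) powr t / K) \<le> (a1+a2+a3) powr t / K - 1"
      using gp K by (intro ln_le_minus_one) simp
    then have "t * ln (a1+a2+a3) - ln K \<le> (a1+a2+a3) powr t / K - 1"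
      using gp K by (simp add: ln_div ln_powr)
    also have "\<dots> \<le> h x / K - 1" using sub K by (simp add: divide_right_mono)
    finally have "ln (a1+a2+a3) \<le> (ln K - 1)/t + h x / (K*t)"
      using t K by (simp add: field_simps)
    then have "gauss_pdf x mu * ln (a1+a2+a3) \<le> gauss_pdf x mu * ((ln K - 1)/t + h x / (K*t))"
      using gauss_pos[of x mu] by (intro mult_left_mono) auto
    then show ?thesis unfolding g by (simp add: algebra_simps)
  qed
  have "EL mu (m1,m2,m3) \<le> (\<integral>x. (ln K - 1)/t * gauss_pdf x mu + (1/(K*t)) * (gauss_pdf x mu * h x) \<partial>lborel)"
    unfolding EL_def
  proof (rule integral_mono[OF int_gl'])
    show "integrable lborel (\<lambda>x. (ln K - 1)/t * gauss_pdf x mu + (1/(K*t)) * (gauss_pdf x mu * h x))"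
      using G_int_int integrable.intros[OF hint] by simp
  qed (rule pw)
  also have "\<dots> = (ln K - 1)/t + (1/(K*t)) * K"
    using G_int_int integrable.intros[OF hint] has_bochner_integral_integral_eq[OF hint]
      has_bochner_integral_integral_eq[OF G_int[of mu]] by simp
  also have "\<dots> = ln K / t" using K t by (simp add: field_simps)
  also have "ln K = -t*(ln 3 + lc) + ln (Fs t mu (m1,m2,m3)) - ln (1+t)/2"
    unfolding K_def E0_def using Fpos t by (simp add: ln_mult ln_div ln_sqrt)
  finally show ?thesis using t by (simp add: field_simps)
qed

lemma gmm_sel: "gmm3_pdf m x = (gauss_pdf x (fst m) + gauss_pdf x (fst (snd m)) + gauss_pdf x (snd (snd m)))/3"
  by (cases m) (simp add: gmm_simp)

lemma norm_gl_bound: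
  assumes "\<bar>fst m\<bar> \<le> K"
  shows "norm (gauss_pdf x mu * ln (gmm3_pdf m x)) \<le> (lc - ln (1/3) + K\<^sup>2) * gauss_pdf x mu + gauss_pdf x mu * (x - 0)\<^sup>2"
proof (cases m)
  case (fields m1 m2 m3)
  have p: "gauss_pdf x mu > 0" by (rule gauss_pos)
  have a: "ln (gmm3_pdf m x) \<le> 0" using ln_gmm_le lc_pos by (smt (verit))
  have b: "- ln (gmm3_pdf m x) \<le> lc - ln (1/3) + (x-m1)\<^sup>2/2" using ln_gmm_ge1[of x m1 m2 m3] fields by simp
  have "\<bar>m1\<bar>\<^sup>2 \<le> K\<^sup>2" using assms fields by (intro power_mono) auto
  then have k: "m1\<^sup>2 \<le> K\<^sup>2" by simp
  have q0: "(x+m1)\<^sup>2 \<ge> 0" by simp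
  have q: "(x-m1)\<^sup>2/2 \<le> x\<^sup>2 + m1\<^sup>2" using q0 by (simp add: power2_eq_square algebra_simps)
  have "norm (gauss_pdf x mu * ln (gmm3_pdf m x)) = gauss_pdf x mu * (- ln (gmm3_pdf m x))"
    using p a by (simp add: abs_mult)
  also have "\<dots> \<le> gauss_pdf x mu * (lc - ln (1/3) + K\<^sup>2 + x\<^sup>2)"
    using p b k q by (intro mult_left_mono) auto
  also have "\<dots> = (lc - ln (1/3) + K\<^sup>2) * gauss_pdf x mu + gauss_pdf x mu * (x - 0)\<^sup>2"
    by (simp add: algebra_simps)
  finally show ?thesis .
qed

lemma EL_cont: "continuous_on {m::real\<times>real\<times>real. \<bar>fst m\<bar> \<le> K} (EL mu)"
proof (rule continuous_on_sequentiallyI)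
  fix u a assume u: "\<forall>n. u n \<in> {m::real\<times>real\<times>real. \<bar>fst m\<bar> \<le> K}" and a: "a \<in> {m::real\<times>real\<times>real. \<bar>fst m\<bar> \<le> K}" and lim: "u \<longlonglongrightarrow> a"
  show "(\<lambda>n. EL mu (u n)) \<longlonglongrightarrow> EL mu a"
    unfolding EL_def
  proof (rule integral_dominated_convergence)
    show "(\<lambda>x. gauss_pdf x mu * ln (gmm3_pdf a x)) \<in> borel_measurable lborel" by measurable
    show "\<And>n. (\<lambda>x. gauss_pdf x mu * ln (gmm3_pdf (u n) x)) \<in> borel_measurable lborel" by measurable
    show "integrable lborel (\<lambda>x. (lc - ln (1/3) + K\<^sup>2) * gauss_pdf x mu + gauss_pdf x mu * (x - 0)\<^sup>2)"
      using G_sq_int[of mu 0] G_int_int[of mu] by simp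
    show "AE x in lborel. (\<lambda>n. gauss_pdf x mu * ln (gmm3_pdf (u n) x)) \<longlonglongrightarrow> gauss_pdf x mu * ln (gmm3_pdf a x)"
    proof (intro AE_I2)
      fix x
      have f: "(\<lambda>n. fst (u n)) \<longlonglongrightarrow> fst a" "(\<lambda>n. fst (snd (u n))) \<longlonglongrightarrow> fst (snd a)"
        "(\<lambda>n. snd (snd (u n))) \<longlonglongrightarrow> snd (snd a)"
        using lim by (auto intro!: tendsto_intros)
      have "(\<lambda>n. gmm3_pdf (u n) x) \<longlonglongrightarrow> gmm3_pdf a x"
        unfolding gmm_sel gauss_pdf_def using lim by (intro tendsto_intros f) auto
      then show "(\<lambda>n. gauss_pdf x mu * ln (gmm3_pdf (u n) x)) \<longlonglongrightarrow> gauss_pdf x mu * ln (gmm3_pdf a x)"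
        using gmm_pos[of a x] by (intro tendsto_intros) auto
    qed
    show "\<And>n. AE x in lborel. norm (gauss_pdf x mu * ln (gmm3_pdf (u n) x)) \<le> (lc - ln (1/3) + K\<^sup>2) * gauss_pdf x mu + gauss_pdf x mu * (x - 0)\<^sup>2"
      using u by (intro AE_I2 norm_gl_bound) auto
  qed
qed

lemma L_cont: "continuous_on {m::real\<times>real\<times>real. \<bar>fst m\<bar> \<le> K} (pop_loglik (a1,a2,a3))"
proof -
  have "pop_loglik (a1,a2,a3) = (\<lambda>m. (EL a1 m + EL a2 m + EL a3 m)/3)" using pop_decomp by auto
  then show ?thesis using EL_cont by (auto intro!: continuous_intros)
qed

lemma exp_neg_le_inv: "(y::real) > 0 \<Longrightarrow> exp (-y) \<le> 1/y"
proof -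
  assume y: "y > 0"
  have "exp y \<ge> 1 + y" by (rule exp_ge_add_one_self)
  then have "exp y \<ge> y" by linarith
  then have "1 / exp y \<le> 1 / y" using y by (intro divide_left_mono) auto
  then show ?thesis by (simp add: exp_minus inverse_eq_divide)
qed

lemma exp_mono_sq: "(t::real) > 0 \<Longrightarrow> Q \<le> d \<Longrightarrow> exp(-t*d/(2*(1+t))) \<le> exp(-t*Q/(2*(1+t)))"
  by (simp add: divide_right_mono mult_left_mono)

lemma hlp: "(-t)*Q/(D::real) - ((-t)*d/D) = -(t*(Q - d)/D)"
proof -
  have "(-t)*Q/(D::real) - ((-t)*d/D) = ((-t)*Q - (-t)*d)/D" by (simp add: diff_divide_distrib)
  also have "(-t)*Q - (-t)*d = -(t*(Q-d))" by (simp add: algebra_simps)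
  finally show ?thesis by simp
qed

lemma Fs_pos: "Fs t mu m > 0"
  by (cases m) (simp add: Fs_def add_pos_pos)

lemma F_far:
  assumes t: "t > 0" and h: "(mu-m1)\<^sup>2 \<ge> Q" "(mu-m2)\<^sup>2 \<ge> Q" "(mu-m3)\<^sup>2 \<ge> Q"
  shows "ln (Fs t mu (m1,m2,m3)) / t \<le> ln 3 / t - Q/(2*(1+t))"
proof -
  have "Fs t mu (m1,m2,m3) \<le> 3 * exp(-t*Q/(2*(1+t)))"
    unfolding Fs_def prod.case using exp_mono_sq[OF t h(1)] exp_mono_sq[OF t h(2)] exp_mono_sq[OF t h(3)] by linarith
  then have "ln (Fs t mu (m1,m2,m3)) \<le> ln (3 * exp(-t*Q/(2*(1+t))))"
    using Fs_pos by (subst ln_le_cancel_iff) auto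
  also have "\<dots> = ln 3 - t*Q/(2*(1+t))" by (simp add: ln_mult)
  finally have "ln (Fs t mu (m1,m2,m3)) / t \<le> (ln 3 - t*Q/(2*(1+t))) / t" using t by (intro divide_right_mono) auto
  also have "\<dots> = ln 3 / t - Q/(2*(1+t))" using t by (simp add: diff_divide_distrib)
  finally show ?thesis .
qed

lemma F_any:
  assumes t: "t > 0"
  shows "ln (Fs t mu (m1,m2,m3)) / t \<le> ln 3 / t"
  using F_far[OF t, of 0 mu m1 m2 m3] t by simp

lemma F_near1:
  assumes t: "0 < t" "t \<le> 1" and h: "(mu-m1)\<^sup>2 \<le> P" "(mu-m2)\<^sup>2 \<ge> Q" "(mu-m3)\<^sup>2 \<ge> Q" and PQ: "P < Q"
  shows "ln (Fs t mu (m1,m2,m3)) / t \<le> -(mu-m1)\<^sup>2/(2*(1+t)) + 8/(t\<^sup>2*(Q-P))"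
proof -
  define a where "a = exp(-t*(mu-m1)\<^sup>2/(2*(1+t)))"
  define e where "e = exp(-t*Q/(2*(1+t)))"
  have a: "a > 0" unfolding a_def by simp
  have e: "e > 0" unfolding e_def by simp
  have F: "Fs t mu (m1,m2,m3) \<le> a + 2*e"
    unfolding Fs_def a_def e_def prod.case using exp_mono_sq[OF t(1) h(2)] exp_mono_sq[OF t(1) h(3)] by linarith
  have ea: "e / a = exp(-(t*(Q - (mu-m1)\<^sup>2)/(2*(1+t))))"
  proof -
    have "e / a = exp(-t*Q/(2*(1+t)) - (-t*(mu-m1)\<^sup>2/(2*(1+t))))" unfolding a_def e_def exp_diff by (rule refl)
    also have "-t*Q/(2*(1+t)) - (-t*(mu-m1)\<^sup>2/(2*(1+t))) = -(t*(Q - (mu-m1)\<^sup>2)/(2*(1+t)))"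
      by (rule hlp)
    finally show ?thesis .
  qed
  have y: "t*(Q - P)/(2*(1+t)) > 0" using t PQ by simp
  have "t*(Q - P)/(2*(1+t)) \<le> t*(Q - (mu-m1)\<^sup>2)/(2*(1+t))"
    using t h(1) by (intro divide_right_mono mult_left_mono) auto
  then have "e / a \<le> exp(-(t*(Q - P)/(2*(1+t))))" unfolding ea by simp
  also have "\<dots> \<le> 1 / (t*(Q - P)/(2*(1+t)))" by (rule exp_neg_le_inv[OF y])
  also have "\<dots> = 2*(1+t)/(t*(Q-P))" by simp
  also have "\<dots> \<le> 4/(t*(Q-P))" using t PQ by (intro divide_right_mono) auto
  finally have ea4: "e / a \<le> 4/(t*(Q-P))" .
  have "ln (Fs t mu (m1,m2,m3)) \<le> ln (a + 2*e)"
    using Fs_pos[of t mu "(m1,m2,m3)"] F a e by (subst ln_le_cancel_iff) auto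
  also have "a + 2*e = a * (1 + 2*(e/a))" using a by (simp add: field_simps)
  also have "ln (a * (1 + 2*(e/a))) = ln a + ln (1 + 2*(e/a))"
    by (rule ln_mult_pos) (use a e in \<open>auto intro: add_pos_pos\<close>)
  also have "ln (1 + 2*(e/a)) \<le> 2*(e/a)" using a e by (intro ln_add_one_self_le_self) simp
  also have "ln a = -t*(mu-m1)\<^sup>2/(2*(1+t))" unfolding a_def by simp
  finally have "ln (Fs t mu (m1,m2,m3)) \<le> -t*(mu-m1)\<^sup>2/(2*(1+t)) + 8/(t*(Q-P))" using ea4 by simp
  then have "ln (Fs t mu (m1,m2,m3)) / t \<le> (-t*(mu-m1)\<^sup>2/(2*(1+t)) + 8/(t*(Q-P))) / t"
    using t by (intro divide_right_mono) auto
  also have "\<dots> = (-t*(mu-m1)\<^sup>2/(2*(1+t)))/t + (8/(t*(Q-P)))/t" by (rule add_divide_distrib)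
  also have "(-t*(mu-m1)\<^sup>2/(2*(1+t)))/t = -(mu-m1)\<^sup>2/(2*(1+t))" using t by simp
  also have "(8/(t*(Q-P)))/t = 8/(t\<^sup>2*(Q-P))" by (simp add: power2_eq_square)
  finally show ?thesis .
qed

lemma F_near_one:
  assumes t: "0 < t" "t \<le> 1" and h: "(mu-m1)\<^sup>2 \<ge> Q" "(mu-m2)\<^sup>2 \<ge> Q" and Q: "Q > 0"
  shows "ln (Fs t mu (m1,m2,m3)) / t \<le> 8/(t\<^sup>2*Q)"
proof -
  define e where "e = exp(-t*Q/(2*(1+t)))"
  have e: "e > 0" unfolding e_def by simp
  have F: "Fs t mu (m1,m2,m3) \<le> 1 + 2*e"
  proof -
    have "-t*(mu-m3)\<^sup>2/(2*(1+t)) \<le> 0" using t by (simp add: divide_nonneg_pos)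
    then have "exp(-t*(mu-m3)\<^sup>2/(2*(1+t))) \<le> 1" by simp
    then show ?thesis
      unfolding Fs_def e_def prod.case using exp_mono_sq[OF t(1) h(1)] exp_mono_sq[OF t(1) h(2)] by linarith
  qed
  have y: "t*Q/(2*(1+t)) > 0" using t Q by simp
  have "e \<le> 1/(t*Q/(2*(1+t)))" unfolding e_def using exp_neg_le_inv[OF y] by simp
  also have "\<dots> = 2*(1+t)/(t*Q)" by simp
  also have "\<dots> \<le> 4/(t*Q)" using t Q by (intro divide_right_mono) auto
  finally have e4: "e \<le> 4/(t*Q)" .
  have "ln (Fs t mu (m1,m2,m3)) \<le> ln (1 + 2*e)"
    using Fs_pos F e by (subst ln_le_cancel_iff) auto
  also have "\<dots> \<le> 2*e" using e by (intro ln_add_one_self_le_self) simp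
  finally have "ln (Fs t mu (m1,m2,m3)) \<le> 8/(t*Q)" using e4 by simp
  then have "ln (Fs t mu (m1,m2,m3)) / t \<le> (8/(t*Q)) / t" using t by (intro divide_right_mono) auto
  also have "\<dots> = 8/(t\<^sup>2*Q)" by (simp add: power2_eq_square)
  finally show ?thesis .
qed

lemma F_two:
  assumes h: "(mu-m1)\<^sup>2 \<ge> Q" and Q: "Q > 0"
  shows "ln (Fs 1 mu (m1,m2,m3)) \<le> ln 2 + 2/Q"
proof -
  define e where "e = exp(-1*Q/(2*(1+1)))"
  have e: "e > 0" unfolding e_def by simp
  have F: "Fs 1 mu (m1,m2,m3) \<le> e + 2"
  proof -
    have "exp(-1*(mu-m2)\<^sup>2/(2*(1+1))) \<le> 1" "exp(-1*(mu-m3)\<^sup>2/(2*(1+1))) \<le> 1" by simp_all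
    then show ?thesis
      unfolding Fs_def e_def prod.case using exp_mono_sq[of 1 Q "(mu-m1)\<^sup>2", OF _ h] by linarith
  qed
  have y: "1*Q/(2*(1+1)) > 0" using Q by simp
  have "e \<le> 1/(1*Q/(2*(1+1)))" unfolding e_def using exp_neg_le_inv[OF y] by simp
  also have "\<dots> = 4/Q" by simp
  finally have e4: "e \<le> 4/Q" .
  have "ln (Fs 1 mu (m1,m2,m3)) \<le> ln (2 * (1 + e/2))"
    using Fs_pos F by (subst ln_le_cancel_iff) (auto intro: add_pos_pos e)
  also have "\<dots> = ln 2 + ln (1 + e/2)" using e ln_mult[of 2 "1+e/2"] by (simp add: add_pos_pos)
  also have "ln (1 + e/2) \<le> e/2" using e by (intro ln_add_one_self_le_self) simp
  finally show ?thesis using e4 by simp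
qed

lemma Fs_swap23: "Fs t mu (m1,m2,m3) = Fs t mu (m1,m3,m2)"
  unfolding Fs_def by simp
lemma Fs_rot: "Fs t mu (m1,m2,m3) = Fs t mu (m2,m3,m1)"
  unfolding Fs_def by simp
lemma Fs_rot2: "Fs t mu (m1,m2,m3) = Fs t mu (m3,m1,m2)"
  unfolding Fs_def by simp

lemma sq_le_of_abs: "\<bar>x\<bar> \<le> (y::real) \<Longrightarrow> x\<^sup>2 \<le> y\<^sup>2"
proof -
  assume h: "\<bar>x\<bar> \<le> y"
  have "\<bar>x\<bar>\<^sup>2 \<le> y\<^sup>2" using h by (intro power_mono) auto
  then show ?thesis by simp
qed

lemma sq_ge_of_ge: "0 \<le> (y::real) \<Longrightarrow> y \<le> \<bar>x\<bar> \<Longrightarrow> y\<^sup>2 \<le> x\<^sup>2"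
  using sq_le_of_abs[of y "\<bar>x\<bar>"] by simp

lemma EL_near:
  assumes t: "0 < t" "t \<le> 1" and R: "R > 0" and G: "G \<ge> 12*R"
    and mu: "\<bar>mu\<bar> \<le> R" and m1: "-G/3 \<le> m1" "m1 \<le> G/3" and m2: "m2 \<ge> 2*G/3" and m3: "m3 \<ge> 2*G/3"
  shows "EL mu (m1,m2,m3) \<le> - ln 3 - lc - ln(1+t)/(2*t) - (mu-m1)\<^sup>2/(2*(1+t)) + 48/(t\<^sup>2*G\<^sup>2)"
proof -
  define P where "P = (G/3 + R)\<^sup>2"
  define Q where "Q = (2*G/3 - R)\<^sup>2"
  have GP: "G > 0" using G R by simp
  have hP: "(mu-m1)\<^sup>2 \<le> P" unfolding P_def using mu m1 by (intro sq_le_of_abs) auto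
  have hQ2: "(mu-m2)\<^sup>2 \<ge> Q" unfolding Q_def using mu m2 G R by (intro sq_ge_of_ge) auto
  have hQ3: "(mu-m3)\<^sup>2 \<ge> Q" unfolding Q_def using mu m3 G R by (intro sq_ge_of_ge) auto
  have QP: "Q - P = G * (G/3 - 2*R)" unfolding P_def Q_def by (simp add: power2_eq_square algebra_simps)
  have "G * (G/3 - 2*R) \<ge> G * (G/6)" using G GP by (intro mult_left_mono) auto
  then have QP6: "Q - P \<ge> G\<^sup>2/6" unfolding QP by (simp add: power2_eq_square)
  have G2: "G\<^sup>2 > 0" using GP by simp
  have PQ: "P < Q" using QP6 G2 by linarith
  have "8/(t\<^sup>2*(Q-P)) \<le> 8/(t\<^sup>2*(G\<^sup>2/6))"
    using QP6 t G2 PQ by (intro divide_left_mono mult_left_mono mult_pos_pos) auto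
  also have "\<dots> = 48/(t\<^sup>2*G\<^sup>2)" by simp
  finally have e: "8/(t\<^sup>2*(Q-P)) \<le> 48/(t\<^sup>2*G\<^sup>2)" .
  have "P < Q" using QP6 G2 by linarith
  from F_near1[OF t hP hQ2 hQ3 this] e
  have "ln (Fs t mu (m1,m2,m3)) / t \<le> -(mu-m1)\<^sup>2/(2*(1+t)) + 48/(t\<^sup>2*G\<^sup>2)" by simp
  then show ?thesis using UB_comp[OF t, of mu m1 m2 m3] by simp
qed

lemma EL_far:
  assumes t: "0 < t" "t \<le> 1" and R: "R > 0" and G: "G \<ge> 12*R"
    and mu: "\<bar>mu\<bar> \<le> R" and m1: "m1 \<le> -G/3" and m2: "m2 \<ge> 2*G/3" and m3: "m3 \<ge> 2*G/3"
  shows "EL mu (m1,m2,m3) \<le> - ln 3 - lc - ln(1+t)/(2*t) + ln 3 / t - G\<^sup>2/(32*(1+t))"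
proof -
  define Q where "Q = (G/4)\<^sup>2"
  have h1: "(mu-m1)\<^sup>2 \<ge> Q" unfolding Q_def using mu m1 G R by (intro sq_ge_of_ge) auto
  have h2: "(mu-m2)\<^sup>2 \<ge> Q" unfolding Q_def using mu m2 G R by (intro sq_ge_of_ge) auto
  have h3: "(mu-m3)\<^sup>2 \<ge> Q" unfolding Q_def using mu m3 G R by (intro sq_ge_of_ge) auto
  have "Q/(2*(1+t)) = G\<^sup>2/(32*(1+t))" unfolding Q_def by (simp add: power_divide)
  then show ?thesis using UB_comp[OF t, of mu m1 m2 m3] F_far[OF t(1) h1 h2 h3] by simp
qed

lemma EL_any:
  assumes t: "0 < t" "t \<le> 1"
  shows "EL mu (m1,m2,m3) \<le> - ln 3 - lc - ln(1+t)/(2*t) + ln 3 / t"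
  using UB_comp[OF t, of mu m1 m2 m3] F_any[OF t(1), of mu m1 m2 m3] by simp

lemma EL_G_one:
  assumes t: "0 < t" "t \<le> 1" and GP: "G > 0" and m1: "m1 \<le> G/3"
    and m2: "m2 \<ge> 2*G/3" and m3: "m3 \<ge> 2*G/3" and far: "m2 = 2*G/3 \<or> m2 \<ge> 2*G \<or> m3 = 2*G/3 \<or> m3 \<ge> 2*G"
  shows "EL G (m1,m2,m3) \<le> - ln 3 - lc - ln(1+t)/(2*t) + 72/(t\<^sup>2*G\<^sup>2)"
proof -
  define Q where "Q = (G/3)\<^sup>2"
  have Q: "Q > 0" unfolding Q_def using GP by simp
  have h1: "(G-m1)\<^sup>2 \<ge> Q" unfolding Q_def using m1 GP by (intro sq_ge_of_ge) auto
  have e: "8/(t\<^sup>2*Q) = 72/(t\<^sup>2*G\<^sup>2)" unfolding Q_def by (simp add: power_divide)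
  have "ln (Fs t G (m1,m2,m3)) / t \<le> 72/(t\<^sup>2*G\<^sup>2)"
  proof (cases "m2 = 2*G/3 \<or> m2 \<ge> 2*G")
    case True
    then have h2: "(G-m2)\<^sup>2 \<ge> Q" unfolding Q_def using GP by (intro sq_ge_of_ge) auto
    show ?thesis using F_near_one[OF t h1 h2 Q, of m3] e by simp
  next
    case False
    then have "m3 = 2*G/3 \<or> m3 \<ge> 2*G" using far by auto
    then have h3: "(G-m3)\<^sup>2 \<ge> Q" unfolding Q_def using GP by (intro sq_ge_of_ge) auto
    show ?thesis using F_near_one[OF t h1 h3 Q, of m2] e Fs_swap23[of t G m1 m2 m3] by simp
  qed
  then show ?thesis using UB_comp[OF t, of G m1 m2 m3] by simp
qed

lemma EL_G_two:
  assumes GP: "G > 0" and m1: "m1 \<le> G/3"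
  shows "EL G (m1,m2,m3) \<le> - ln 3 - lc + ln 2 / 2 + 9/(2*G\<^sup>2)"
proof -
  define Q where "Q = (2*G/3)\<^sup>2"
  have Q: "Q > 0" unfolding Q_def using GP by simp
  have h1: "(G-m1)\<^sup>2 \<ge> Q" unfolding Q_def using m1 GP by (intro sq_ge_of_ge) auto
  have e: "2/Q = 9/(2*G\<^sup>2)" unfolding Q_def by (simp add: power_divide power2_eq_square)
  show ?thesis using UB_comp[of 1 G m1 m2 m3] F_two[OF h1 Q, of m2 m3] e by simp
qed

lemma ln2_ge: "ln (2::real) \<ge> 1/2"
proof -
  have "ln (1/2::real) \<le> 1/2 - 1" by (rule ln_le_minus_one) simp
  then show ?thesis by (simp add: ln_div)
qed

lemma ln3_le: "ln (3::real) \<le> 2"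
  using ln_le_minus_one[of "3::real"] by simp

lemma lin_near: "(x::real) \<le> k - p + e \<Longrightarrow> y \<le> k - q + e \<Longrightarrow> p + q = s \<Longrightarrow> x + y \<le> 2*k - s + 2*e"
  by linarith

lemma far_arith:
  fixes a b c L3 lc lb l g t V G2 R2 :: real
  assumes "a \<le> - L3 - lc - lb + l - g" "b \<le> - L3 - lc - lb + l - g" "c \<le> - L3 - lc - lb + l"
    "lb \<ge> 1/2 - t/2" "l \<le> 16*V" "g \<ge> G2/36" "G2 \<ge> 262144*V" "R2 \<le> V" "t \<le> 1/8" "V \<ge> 1"
  shows "(a+b+c)/3 \<le> - L3 - lc - 1/2 - R2/3 - 1/20"
  using assms by argo

lemma badb_arith:
  fixes x y z L3 lc lb s e l t V G2 R2 L2 :: real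
  assumes "x + y \<le> 2*(- L3 - lc - lb) - s + 2*e" "z \<le> - L3 - lc - lb + l"
    "lb \<ge> 1/2 - t/2" "l \<le> 16*V" "s \<ge> 8*G2/81" "G2 \<ge> 262144*V" "R2 \<le> V" "t \<le> 1/8" "V \<ge> 1"
    "e \<le> 48/4096" "L2 \<ge> 1/2"
  shows "(x+y+z)/3 \<le> - L3 - lc - 1/2 - R2/3 + L2/3 - 1/20"
  using assms by argo

lemma badc_arith:
  fixes x y z L3 lc lb s e e2 r1 p t R2 L2 :: real
  assumes "x + y \<le> 2*(- L3 - lc - lb) - s + 2*e" "z \<le> - L3 - lc - lb + e2"
    "lb \<ge> 1/2 - t/2" "s \<ge> r1" "r1 \<ge> R2 - p" "t + p = 1/8" "p \<ge> 0"
    "e \<le> 48/4096" "e2 \<le> 72/4096" "L2 \<ge> 1/2"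
  shows "(x+y+z)/3 \<le> - L3 - lc - 1/2 - R2/3 + L2/3 - 1/20"
  using assms by argo

lemma p2_arith:
  fixes x y z L3 lc lb s e e2 r1 p t R2 L2 :: real
  assumes "x + y \<le> 2*(- L3 - lc - lb) - s + 2*e" "z \<le> - L3 - lc + L2/2 + e2"
    "lb \<ge> 1/2 - t/2" "s \<ge> r1" "r1 \<ge> R2 - p" "t + p = 1/8" "p \<ge> 0"
    "e \<le> 48/4096" "e2 \<le> 9/(2*262144)" "L2 \<ge> 1/2"
  shows "(x+y+z)/3 \<le> - L3 - lc - 1/2 - R2/3 + 2*L2/3 - 1/100"
  using assms by argo

lemma mono1: "(x::real) \<le> - L3 - lc - 1/2 - R2/3 - 1/20 \<Longrightarrow> L2 \<ge> 1/2 \<Longrightarrow>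
   x \<le> - L3 - lc - 1/2 - R2/3 + L2/3 - 1/20"
  by argo

lemma mono2: "(x::real) \<le> - L3 - lc - 1/2 - R2/3 - 1/20 \<Longrightarrow> L2 \<ge> 1/2 \<Longrightarrow>
   x \<le> - L3 - lc - 1/2 - R2/3 + 2*L2/3 - 1/100"
  by argo

lemma main_bounds:
  fixes R G t V :: real
  assumes R: "R > 0" and V: "V = 1 + R\<^sup>2" and t: "t = 1/(8*V)" and G: "G \<ge> 512*V"
  defines "L \<equiv> \<lambda>m. (EL (-R) m + EL R m + EL G m)/3"
  defines "C \<equiv> - ln 3 - lc - 1/2"
  shows "L (0,G,G) \<ge> C - R\<^sup>2/3 + ln 2/3"
    and "L (0,0,G) \<ge> C - R\<^sup>2/3 + 2*ln 2/3"
    and "\<And>m1 m2 m3. m1 \<le> G/3 \<Longrightarrow> m2 \<ge> 2*G/3 \<Longrightarrow> m3 \<ge> 2*G/3 \<Longrightarrow>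
          (m1 = G/3 \<or> m1 \<le> -G/3 \<or> m2 = 2*G/3 \<or> m2 \<ge> 2*G \<or> m3 = 2*G/3 \<or> m3 \<ge> 2*G) \<Longrightarrow>
          L (m1,m2,m3) \<le> C - R\<^sup>2/3 + ln 2/3 - 1/20"
    and "\<And>m1 m2 m3. m1 \<le> G/3 \<Longrightarrow> m2 \<ge> 2*G/3 \<Longrightarrow> m3 \<ge> 2*G/3 \<Longrightarrow>
          L (m1,m2,m3) \<le> C - R\<^sup>2/3 + 2*ln 2/3 - 1/100"
proof -
  have V1: "V \<ge> 1" using V by simp
  have tpos: "t > 0" using t V1 by simp
  have t8: "t \<le> 1/8" unfolding t using V1 by (intro divide_left_mono) auto
  have t1: "t \<le> 1" using t8 by simp
  have tV: "t * V = 1/8" using t V1 by simp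
  have tR: "t + R\<^sup>2*t = 1/8" using tV V by (simp add: algebra_simps)
  have pnn: "R\<^sup>2*t \<ge> 0" using tpos by simp
  have invt: "1/t = 8*V" using t V1 by simp
  have GP: "G > 0" using G V1 by simp
  have G12: "G \<ge> 12*R"
  proof -
    have "(R - 1)\<^sup>2 \<ge> 0" by simp
    then have "12*R \<le> 6*(1+R\<^sup>2)" by (simp add: power2_eq_square algebra_simps)
    then show ?thesis using G V R by simp
  qed
  have GG: "G\<^sup>2 \<ge> 262144 * V"
  proof -
    have "G * G \<ge> (512*V) * 512" using G V1 by (intro mult_mono) auto
    then show ?thesis by (simp add: power2_eq_square)
  qed
  have tG: "t * G \<ge> 64"
  proof -
    have "t * (512*V) \<le> t * G" using G tpos by (intro mult_left_mono) auto
    moreover have "t * (512*V) = 64" using tV by (simp add: algebra_simps)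
    ultimately show ?thesis by simp
  qed
  have tG2: "t\<^sup>2 * G\<^sup>2 \<ge> 4096"
  proof -
    have "(t*G)*(t*G) \<ge> 64*64" using tG by (intro mult_mono) auto
    then show ?thesis by (simp add: power2_eq_square algebra_simps)
  qed
  have e48: "48/(t\<^sup>2*G\<^sup>2) \<le> 48/4096" using tG2 by (intro divide_left_mono) auto
  have e72: "72/(t\<^sup>2*G\<^sup>2) \<le> 72/4096" using tG2 by (intro divide_left_mono) auto
  have eG: "9/(2*G\<^sup>2) \<le> 9/(2*262144)" using GG V1 by (intro divide_left_mono) auto
  have lb: "ln(1+t)/(2*t) \<ge> 1/2 - t/2"
  proof -
    have "t - t\<^sup>2 \<le> ln (1+t)" using tpos t1 by (intro ln_one_plus_pos_lower_bound) auto
    then have "(t - t\<^sup>2)/(2*t) \<le> ln(1+t)/(2*t)" using tpos by (intro divide_right_mono) auto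
    moreover have "(t - t\<^sup>2)/(2*t) = 1/2 - t/2" using tpos by (simp add: field_simps power2_eq_square)
    ultimately show ?thesis by simp
  qed
  have l3: "ln 3 / t \<le> 16 * V"
  proof -
    have "ln 3 / t = ln 3 * (1/t)" by simp
    also have "\<dots> \<le> 2 * (8*V)" unfolding invt using ln3_le V1 by (intro mult_mono) auto
    finally show ?thesis by simp
  qed
  have l2: "ln (2::real) \<ge> 1/2" by (rule ln2_ge)
  have inv1t: "1/(1+t) \<ge> 1 - t"
  proof -
    have "(1-t)*(1+t) \<le> 1" by (simp add: algebra_simps power2_eq_square)
    then show ?thesis using tpos by (simp add: field_simps)
  qed
  have R2t: "R\<^sup>2/(1+t) \<ge> R\<^sup>2 - R\<^sup>2*t"
  proof -
    have "R\<^sup>2 * (1 - t) \<le> R\<^sup>2 * (1/(1+t))" using inv1t by (intro mult_left_mono) auto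
    then show ?thesis by (simp add: algebra_simps)
  qed
  have farG: "G\<^sup>2/(32*(1+t)) \<ge> G\<^sup>2/36"
    using t8 tpos by (intro divide_left_mono) auto
  have gpos: "\<And>x a. gauss_pdf x a \<ge> 0" using gauss_pos less_imp_le by blast
  have lb0: "\<And>mu. EL mu (0,G,G) \<ge> ln (1/3) - lc - (1 + (mu-0)\<^sup>2)/2"
    by (rule LB_comp) (auto simp: gmm_simp gpos)
  have lbG: "EL G (0,G,G) \<ge> ln (2/3) - lc - (1 + (G-G)\<^sup>2)/2"
    by (rule LB_comp) (auto simp: gmm_simp gpos)
  have ln23: "ln (2/3::real) = ln 2 - ln 3" by (simp add: ln_div)
  have ln13: "ln (1/3::real) = - ln 3" by (simp add: ln_div)
  show "L (0,G,G) \<ge> C - R\<^sup>2/3 + ln 2/3"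
    using lb0[of "-R"] lb0[of R] lbG unfolding L_def C_def ln23 ln13 by (simp add: power2_eq_square field_simps)
  have lb0': "\<And>mu. EL mu (0,0,G) \<ge> ln (2/3) - lc - (1 + (mu-0)\<^sup>2)/2"
    by (rule LB_comp) (auto simp: gmm_simp gpos)
  have lbG': "EL G (0,0,G) \<ge> ln (1/3) - lc - (1 + (G-G)\<^sup>2)/2"
    by (rule LB_comp) (auto simp: gmm_simp gpos)
  show "L (0,0,G) \<ge> C - R\<^sup>2/3 + 2*ln 2/3"
    using lb0'[of "-R"] lb0'[of R] lbG' unfolding L_def C_def ln23 ln13 by (simp add: power2_eq_square field_simps)
  have far: "L (m1,m2,m3) \<le> C - R\<^sup>2/3 - 1/20"
    if m1: "m1 \<le> -G/3" and m2: "m2 \<ge> 2*G/3" and m3: "m3 \<ge> 2*G/3" for m1 m2 m3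
  proof -
    have a: "EL (-R) (m1,m2,m3) \<le> - ln 3 - lc - ln(1+t)/(2*t) + ln 3 / t - G\<^sup>2/(32*(1+t))"
      using R by (intro EL_far[OF tpos t1 R G12 _ m1 m2 m3]) auto
    have b: "EL R (m1,m2,m3) \<le> - ln 3 - lc - ln(1+t)/(2*t) + ln 3 / t - G\<^sup>2/(32*(1+t))"
      using R by (intro EL_far[OF tpos t1 R G12 _ m1 m2 m3]) auto
    have c: "EL G (m1,m2,m3) \<le> - ln 3 - lc - ln(1+t)/(2*t) + ln 3 / t" by (rule EL_any[OF tpos t1])
    have r: "R\<^sup>2 \<le> V" using V by simp
    have g: "G\<^sup>2/(32*(1+t)) \<ge> G\<^sup>2/36" by (rule farG)
    show ?thesis unfolding L_def C_def by (rule far_arith[OF a b c lb l3 g GG r t8 V1])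
  qed
  have nearR: "EL (-R) (m1,m2,m3) + EL R (m1,m2,m3) \<le>
      2*(- ln 3 - lc - ln(1+t)/(2*t)) - (R\<^sup>2 + m1\<^sup>2)/(1+t) + 2*(48/(t\<^sup>2*G\<^sup>2))"
    if m1: "-G/3 \<le> m1" "m1 \<le> G/3" and m2: "m2 \<ge> 2*G/3" and m3: "m3 \<ge> 2*G/3" for m1 m2 m3
  proof -
    have a: "EL (-R) (m1,m2,m3) \<le> - ln 3 - lc - ln(1+t)/(2*t) - (-R-m1)\<^sup>2/(2*(1+t)) + 48/(t\<^sup>2*G\<^sup>2)"
      using R by (intro EL_near[OF tpos t1 R G12 _ m1 m2 m3]) auto
    have b: "EL R (m1,m2,m3) \<le> - ln 3 - lc - ln(1+t)/(2*t) - (R-m1)\<^sup>2/(2*(1+t)) + 48/(t\<^sup>2*G\<^sup>2)"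
      using R by (intro EL_near[OF tpos t1 R G12 _ m1 m2 m3]) auto
    have "(-R-m1)\<^sup>2/(2*(1+t)) + (R-m1)\<^sup>2/(2*(1+t)) = ((-R-m1)\<^sup>2 + (R-m1)\<^sup>2)/(2*(1+t))"
      by (simp add: add_divide_distrib)
    also have "((-R-m1)\<^sup>2 + (R-m1)\<^sup>2) = 2*(R\<^sup>2 + m1\<^sup>2)" by (simp add: power2_eq_square algebra_simps)
    also have "2*(R\<^sup>2 + m1\<^sup>2)/(2*(1+t)) = (R\<^sup>2 + m1\<^sup>2)/(1+t)" by (rule mult_divide_mult_cancel_left) simp
    finally show ?thesis by (rule lin_near[OF a b])
  qed
  show "L (m1,m2,m3) \<le> C - R\<^sup>2/3 + ln 2/3 - 1/20"
    if m1: "m1 \<le> G/3" and m2: "m2 \<ge> 2*G/3" and m3: "m3 \<ge> 2*G/3"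
      and bad: "m1 = G/3 \<or> m1 \<le> -G/3 \<or> m2 = 2*G/3 \<or> m2 \<ge> 2*G \<or> m3 = 2*G/3 \<or> m3 \<ge> 2*G" for m1 m2 m3
  proof (cases "m1 \<le> -G/3")
    case True
    show ?thesis unfolding C_def by (rule mono1[OF far[OF True m2 m3, unfolded C_def] l2])
  next
    case False
    note nf = False
    then have m1': "-G/3 \<le> m1" by simp
    note nR = nearR[OF m1' m1 m2 m3]
    have q: "(R\<^sup>2 + m1\<^sup>2)/(1+t) \<ge> R\<^sup>2/(1+t)"
      by (intro divide_right_mono) (use tpos in auto)
    show ?thesis
    proof (cases "m1 = G/3")
      case True
      have c: "EL G (m1,m2,m3) \<le> - ln 3 - lc - ln(1+t)/(2*t) + ln 3 / t" by (rule EL_any[OF tpos t1])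
      have "(R\<^sup>2 + m1\<^sup>2)/(1+t) \<ge> m1\<^sup>2/(9/8)"
        using tpos t8 by (intro frac_le) auto
      moreover have "m1\<^sup>2/(9/8) = 8*G\<^sup>2/81" unfolding True by (simp add: power_divide)
      ultimately have m1b: "(R\<^sup>2 + m1\<^sup>2)/(1+t) \<ge> 8*G\<^sup>2/81" by metis
      have r: "R\<^sup>2 \<le> V" using V by simp
      show ?thesis unfolding L_def C_def by (rule badb_arith[OF nR c lb l3 m1b GG r t8 V1 e48 l2])
    next
      case False
      then have "m2 = 2*G/3 \<or> m2 \<ge> 2*G \<or> m3 = 2*G/3 \<or> m3 \<ge> 2*G" using bad nf False by auto
      then have c: "EL G (m1,m2,m3) \<le> - ln 3 - lc - ln(1+t)/(2*t) + 72/(t\<^sup>2*G\<^sup>2)"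
        using GP m1 m2 m3 by (intro EL_G_one[OF tpos t1]) auto
      show ?thesis unfolding L_def C_def by (rule badc_arith[OF nR c lb q R2t tR pnn e48 e72 l2])
    qed
  qed
  show "L (m1,m2,m3) \<le> C - R\<^sup>2/3 + 2*ln 2/3 - 1/100"
    if m1: "m1 \<le> G/3" and m2: "m2 \<ge> 2*G/3" and m3: "m3 \<ge> 2*G/3" for m1 m2 m3
  proof (cases "m1 \<le> -G/3")
    case True
    show ?thesis unfolding C_def by (rule mono2[OF far[OF True m2 m3, unfolded C_def] l2])
  next
    case False
    then have m1': "-G/3 \<le> m1" by simp
    note nR = nearR[OF m1' m1 m2 m3]
    have q: "(R\<^sup>2 + m1\<^sup>2)/(1+t) \<ge> R\<^sup>2/(1+t)"
      by (intro divide_right_mono) (use tpos in auto)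
    have c: "EL G (m1,m2,m3) \<le> - ln 3 - lc + ln 2 / 2 + 9/(2*G\<^sup>2)" by (rule EL_G_two[OF GP m1])
    show ?thesis unfolding L_def C_def by (rule p2_arith[OF nR c lb q R2t tR pnn e48 eG l2])
  qed
qed

theorem mainTheorem2:
  fixes R :: real
  assumes "R > 0"
  shows "\<exists>A::real. \<forall>\<gamma>::real. \<gamma> > A \<longrightarrow> \<gamma> > 0 \<longrightarrow>
     (let L = pop_loglik (-R, R, \<gamma> * R) in
        L (0, \<gamma> * R, \<gamma> * R) > Sup (L ` faces_regionD R \<gamma>)
      \<and> (\<exists>m \<in> regionD R \<gamma>. (\<exists>e > 0. \<forall>m'. dist m' m < e \<longrightarrow> L m' \<le> L m)
                            \<and> (\<exists>m'. L m' > L m)))"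
proof (intro exI allI impI)
  fix \<gamma> :: real
  define V where "V = 1 + R\<^sup>2"
  define t where "t = 1/(8*V)"
  assume g: "\<gamma> > 512*(1+R\<^sup>2)/R" and gpos: "\<gamma> > 0"
  define G where "G = \<gamma> * R"
  have R: "R > 0" by fact
  have G: "G \<ge> 512*V"
  proof -
    have "512*(1+R\<^sup>2)/R * R \<le> \<gamma> * R" using g R by (intro mult_right_mono) auto
    then show ?thesis using R unfolding G_def V_def by simp
  qed
  have V1: "V \<ge> 1" unfolding V_def by simp
  have GP: "G > 0" using G V1 by simp
  define L where "L = pop_loglik (-R, R, \<gamma> * R)"
  have Leq: "L m = (EL (-R) m + EL R m + EL G m)/3" for m
    unfolding L_def G_def by (rule pop_decomp)
  define C where "C = - ln 3 - lc - 1/2"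
  note mb = main_bounds[OF R V_def t_def G]
  have lb0: "L (0,G,G) \<ge> C - R\<^sup>2/3 + ln 2/3" unfolding Leq C_def using mb(1) by simp
  have lb2: "L (0,0,G) \<ge> C - R\<^sup>2/3 + 2*ln 2/3" unfolding Leq C_def using mb(2) by simp
  have bad: "L (m1,m2,m3) \<le> C - R\<^sup>2/3 + ln 2/3 - 1/20"
    if "m1 \<le> G/3" "m2 \<ge> 2*G/3" "m3 \<ge> 2*G/3"
      "m1 = G/3 \<or> m1 \<le> -G/3 \<or> m2 = 2*G/3 \<or> m2 \<ge> 2*G \<or> m3 = 2*G/3 \<or> m3 \<ge> 2*G" for m1 m2 m3
    unfolding Leq C_def using mb(3)[OF that] by simp
  have allD: "L (m1,m2,m3) \<le> C - R\<^sup>2/3 + 2*ln 2/3 - 1/100"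
    if "m1 \<le> G/3" "m2 \<ge> 2*G/3" "m3 \<ge> 2*G/3" for m1 m2 m3
    unfolding Leq C_def using mb(4)[OF that] by simp
  have regD: "regionD R \<gamma> = {(m1,m2,m3). m1 \<le> G/3 \<and> m2 \<ge> 2*G/3 \<and> m3 \<ge> 2*G/3}"
    unfolding regionD_def G_def by (simp add: mult.assoc)
  have facesD: "faces_regionD R \<gamma> = {(m1,m2,m3). (m1 \<le> G/3 \<and> m2 \<ge> 2*G/3 \<and> m3 \<ge> 2*G/3) \<and>
      (m1 = G/3 \<or> m2 = 2*G/3 \<or> m3 = 2*G/3)}"
    unfolding faces_regionD_def regD unfolding G_def by (simp add: mult.assoc)
  have part1: "L (0,G,G) > Sup (L ` faces_regionD R \<gamma>)"
  proof -
    have ne: "L ` faces_regionD R \<gamma> \<noteq> {}"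
    proof -
      have "(G/3, 2*G/3, 2*G/3) \<in> faces_regionD R \<gamma>" unfolding facesD using GP by simp
      then show ?thesis by blast
    qed
    have "Sup (L ` faces_regionD R \<gamma>) \<le> C - R\<^sup>2/3 + ln 2/3 - 1/20"
    proof (rule cSup_least[OF ne])
      fix y assume "y \<in> L ` faces_regionD R \<gamma>"
      then obtain m1 m2 m3 where y: "y = L (m1,m2,m3)" and m: "(m1,m2,m3) \<in> faces_regionD R \<gamma>"
        by auto
      from m have "m1 \<le> G/3" "m2 \<ge> 2*G/3" "m3 \<ge> 2*G/3" "m1 = G/3 \<or> m2 = 2*G/3 \<or> m3 = 2*G/3"
        unfolding facesD by auto
      then show "y \<le> C - R\<^sup>2/3 + ln 2/3 - 1/20" unfolding y by (intro bad) auto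
    qed
    then show ?thesis using lb0 by simp
  qed
  define K where "K = 2*G"
  define DK where "DK = {-K..G/3} \<times> {2*G/3..K} \<times> {2*G/3..K}"
  have cDK: "compact DK" unfolding DK_def by (intro compact_Times compact_Icc)
  have m0DK: "(0,G,G) \<in> DK" unfolding DK_def K_def using GP by simp
  have sub: "DK \<subseteq> {m::real\<times>real\<times>real. \<bar>fst m\<bar> \<le> K}" unfolding DK_def K_def using GP by auto
  have cont: "continuous_on DK L"
    unfolding L_def by (rule continuous_on_subset[OF L_cont sub])
  obtain m where mDK: "m \<in> DK" and mmax: "\<And>y. y \<in> DK \<Longrightarrow> L y \<le> L m"
    using continuous_attains_sup[OF cDK _ cont] m0DK by blast
  obtain m1 m2 m3 where mdef: "m = (m1,m2,m3)" by (cases m)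
  have mr: "-K \<le> m1" "m1 \<le> G/3" "2*G/3 \<le> m2" "m2 \<le> K" "2*G/3 \<le> m3" "m3 \<le> K"
    using mDK unfolding DK_def mdef by auto
  have Lm: "L m \<ge> C - R\<^sup>2/3 + ln 2/3" using mmax[OF m0DK] lb0 by simp
  have notbad: "\<not> (m1 = G/3 \<or> m1 \<le> -G/3 \<or> m2 = 2*G/3 \<or> m2 \<ge> 2*G \<or> m3 = 2*G/3 \<or> m3 \<ge> 2*G)"
  proof
    assume "m1 = G/3 \<or> m1 \<le> -G/3 \<or> m2 = 2*G/3 \<or> m2 \<ge> 2*G \<or> m3 = 2*G/3 \<or> m3 \<ge> 2*G"
    from bad[OF mr(2) mr(3) mr(5) this] Lm show False unfolding mdef by simp
  qed
  have i1: "-K < m1" "m1 < G/3" using notbad mr GP unfolding K_def by auto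
  have i2: "2*G/3 < m2" "m2 < K" "2*G/3 < m3" "m3 < K" using notbad mr unfolding K_def by auto
  define e where "e = min (min (m1 + K) (G/3 - m1)) (min (min (m2 - 2*G/3) (K - m2)) (min (m3 - 2*G/3) (K - m3)))"
  have epos: "e > 0" unfolding e_def using i1 i2 by simp
  have locmax: "\<forall>m'. dist m' m < e \<longrightarrow> L m' \<le> L m"
  proof (intro allI impI)
    fix m' :: "real \<times> real \<times> real" assume d: "dist m' m < e"
    obtain a b c where m': "m' = (a,b,c)" by (cases m')
    have "dist a m1 \<le> dist m' m" unfolding m' mdef using dist_fst_le[of "(a,b,c)" "(m1,m2,m3)"] by simp
    moreover have "dist (b,c) (m2,m3) \<le> dist m' m" unfolding m' mdef using dist_snd_le[of "(a,b,c)" "(m1,m2,m3)"] by simp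
    moreover have "dist b m2 \<le> dist (b,c) (m2,m3)" using dist_fst_le[of "(b,c)" "(m2,m3)"] by simp
    moreover have "dist c m3 \<le> dist (b,c) (m2,m3)" using dist_snd_le[of "(b,c)" "(m2,m3)"] by simp
    ultimately have "\<bar>a - m1\<bar> < e" "\<bar>b - m2\<bar> < e" "\<bar>c - m3\<bar> < e" using d by (auto simp: dist_real_def)
    then have ab: "a - m1 < e" "m1 - a < e" "b - m2 < e" "m2 - b < e" "c - m3 < e" "m3 - c < e"
      by (auto simp: abs_less_iff)
    have eb: "e \<le> m1 + K" "e \<le> G/3 - m1" "e \<le> m2 - 2*G/3" "e \<le> K - m2" "e \<le> m3 - 2*G/3" "e \<le> K - m3"
      unfolding e_def by (simp_all add: min_le_iff_disj)
    have "-K \<le> a" "a \<le> G/3" "2*G/3 \<le> b" "b \<le> K" "2*G/3 \<le> c" "c \<le> K"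
      using ab eb by linarith+
    then have "m' \<in> DK" unfolding m' DK_def by simp
    then show "L m' \<le> L m" by (rule mmax)
  qed
  have mD: "m \<in> regionD R \<gamma>" unfolding regD mdef using mr by simp
  have better: "L (0,0,G) > L m" using allD[OF mr(2) mr(3) mr(5)] lb2 unfolding mdef by simp
  show "let L = pop_loglik (-R, R, \<gamma> * R) in
        L (0, \<gamma> * R, \<gamma> * R) > Sup (L ` faces_regionD R \<gamma>)
      \<and> (\<exists>m \<in> regionD R \<gamma>. (\<exists>e > 0. \<forall>m'. dist m' m < e \<longrightarrow> L m' \<le> L m)
                            \<and> (\<exists>m'. L m' > L m))"
    using part1 mD epos locmax better unfolding Let_def L_def G_def by blast
qed

end
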